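(* Let $I\subseteq\{1,\dots,n\}$ and let $u_0$ be the longest element of $W_{\overline I^0}$. Then: (1) $F_I$ is the convex hull of $W_{\overline I^0}\lambda$; (2) $u_0\lambda$ is the least element of $P_I$ with respect to $\le$; (3) the space $E_{F_I}=\mathrm{Span}\{\mu-\nu\mid \mu,\nu\in F_I\}$ is spanned by the simple roots in $\Pi_{\overline I^0}=\{\alpha_j\mid j\in\overline I^0\}$, and $\dim E_{F_I}=|\overline I^0|$.
   Context: Let $\mathfrak g$ be a finite-dimensional complex simple Lie algebra with root system $\Phi$, base $\Pi=\{\alpha_1,\dots,\alpha_n\}$, Weyl group $W$. Let $E$ be the real span of $\Pi$ with $W$-invariant inner product $(\cdot,\cdot)$. Fix a dominant integral weight $\lambda$; $P(\lambda)$ is the set of weights of the irreducible module of highest weight $\lambda$. For $\mu\in E$, $c_i(\mu)$ is the coefficient of $\alpha_i$ in $\mu$ in the basis $\Pi$; $\lambda=\sum_i m_i\alpha_i$. Partial order: $\mu\le\nu$ iff $\nu-\mu$ is a nonnegative integer combination of simple roots. Weight polytope $\mathbf P=\mathrm{conv}(W\lambda)$. For $I\subseteq\{1,\dots,n\}$: $F_I=\{x\in\mathbf P\mid c_i(x)=m_i\ \forall i\in I\}$, $P_I=\{\mu\in P(\lambda)\mid c_i(\mu)=m_i\ \forall i\in I\}$. For $J\subseteq\{1,\dots,n\}$, $W_J$ is the subgroup generated by $s_{\alpha_j}$, $j\in J$. The extended Dynkin diagram is the Dynkin diagram of $\Pi$ with an extra node $\{-\lambda\}$ joined by a single edge to $\alpha_i$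 iff $(\lambda,\alpha_i)>0$. Let $\overline I$ be the complement of $I$ in $\{1,\dots,n\}$, and let $\Gamma^0$ be the connected component containing $\{-\lambda\}$ of the induced subdiagram on the vertex set $\{\alpha_j\mid j\in\overline I\}\cup\{-\lambda\}$; $\overline I^0$ is the set of indices $j$ such that $\alpha_j$ is a vertex of $\Gamma^0$. *)

theory Defs
  imports "HOL-Analysis.Analysis"
begin

definition refl :: "'a::euclidean_space \<Rightarrow> 'a \<Rightarrow> 'a" where
  "refl a x = x - ((2 * (x \<bullet> a)) / (a \<bullet> a)) *\<^sub>R a"

definition root_system :: "'a::euclidean_space set \<Rightarrow> bool" where
  "root_system Phi \<longleftrightarrow> finite Phi \<and> 0 \<notin> Phi \<and> span Phi = UNIV \<and>
     (\<forall>a\<in>Phi. refl a ` Phi = Phi) \<and>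
     (\<forall>a\<in>Phi. \<forall>b\<in>Phi. (2 * (b \<bullet> a)) / (a \<bullet> a) \<in> \<int>) \<and>
     (\<forall>a\<in>Phi. \<forall>c::real. c *\<^sub>R a \<in> Phi \<longrightarrow> c = 1 \<or> c = -1)"

definition irreducible_rs :: "'a::euclidean_space set \<Rightarrow> bool" where
  "irreducible_rs Phi \<longleftrightarrow> \<not> (\<exists>A B. A \<noteq> {} \<and> B \<noteq> {} \<and> A \<union> B = Phi \<and> A \<inter> B = {} \<and>
      (\<forall>a\<in>A. \<forall>b\<in>B. a \<bullet> b = 0))"

definition is_base :: "'a::euclidean_space set \<Rightarrow> (nat \<Rightarrow> 'a) \<Rightarrow> nat \<Rightarrow> bool" where
  "is_base Phi alpha n \<longleftrightarrow> inj_on alpha {1..n} \<and> alpha ` {1..n} \<subseteq> Phi \<and>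
     independent (alpha ` {1..n}) \<and>
     (\<forall>b\<in>Phi. \<exists>c::nat \<Rightarrow> int. b = (\<Sum>i=1..n. of_int (c i) *\<^sub>R alpha i) \<and>
        ((\<forall>i. c i \<ge> 0) \<or> (\<forall>i. c i \<le> 0)))"

definition coef :: "(nat \<Rightarrow> 'a::euclidean_space) \<Rightarrow> nat \<Rightarrow> 'a \<Rightarrow> nat \<Rightarrow> real" where
  "coef alpha n mu = (THE c. mu = (\<Sum>j=1..n. c j *\<^sub>R alpha j) \<and> (\<forall>j. j \<notin> {1..n} \<longrightarrow> c j = 0))"

inductive_set weyl_sub :: "(nat \<Rightarrow> 'a::euclidean_space) \<Rightarrow> nat set \<Rightarrow> ('a \<Rightarrow> 'a) set"
  for alpha J where
  id: "id \<in> weyl_sub alpha J"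
| step: "w \<in> weyl_sub alpha J \<Longrightarrow> j \<in> J \<Longrightarrow> refl (alpha j) \<circ> w \<in> weyl_sub alpha J"

definition weyl_length :: "(nat \<Rightarrow> 'a::euclidean_space) \<Rightarrow> nat set \<Rightarrow> ('a \<Rightarrow> 'a) \<Rightarrow> nat" where
  "weyl_length alpha J w = (LEAST k. \<exists>js. length js = k \<and> set js \<subseteq> J \<and>
      w = foldr (\<lambda>j f. refl (alpha j) \<circ> f) js id)"

definition longest_elem :: "(nat \<Rightarrow> 'a::euclidean_space) \<Rightarrow> nat set \<Rightarrow> ('a \<Rightarrow> 'a) \<Rightarrow> bool" where
  "longest_elem alpha J u \<longleftrightarrow> u \<in> weyl_sub alpha J \<and>
     (\<forall>w\<in>weyl_sub alpha J. weyl_length alpha J w \<le> weyl_length alpha J u)"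

definition wle :: "(nat \<Rightarrow> 'a::euclidean_space) \<Rightarrow> nat \<Rightarrow> 'a \<Rightarrow> 'a \<Rightarrow> bool" where
  "wle alpha n mu nu \<longleftrightarrow> (\<exists>c::nat \<Rightarrow> nat. nu - mu = (\<Sum>i=1..n. of_nat (c i) *\<^sub>R alpha i))"

definition integral_weight :: "(nat \<Rightarrow> 'a::euclidean_space) \<Rightarrow> nat \<Rightarrow> 'a \<Rightarrow> bool" where
  "integral_weight alpha n mu \<longleftrightarrow> (\<forall>i\<in>{1..n}. (2 * (mu \<bullet> alpha i)) / (alpha i \<bullet> alpha i) \<in> \<int>)"

definition dominant_integral :: "(nat \<Rightarrow> 'a::euclidean_space) \<Rightarrow> nat \<Rightarrow> 'a \<Rightarrow> bool" where
  "dominant_integral alpha n mu \<longleftrightarrow> (\<forall>i\<in>{1..n}. (2 * (mu \<bullet> alpha i)) / (alpha i \<bullet> alpha i) \<in> \<nat>)"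

text \<open>Weights of the irreducible module of highest weight lam (Humphreys 21.3):
  the dominant weights mu \<le> lam and their W-conjugates.\<close>
definition weights :: "(nat \<Rightarrow> 'a::euclidean_space) \<Rightarrow> nat \<Rightarrow> 'a \<Rightarrow> 'a set" where
  "weights alpha n lam = {w mu | w mu. w \<in> weyl_sub alpha {1..n} \<and>
      dominant_integral alpha n mu \<and> wle alpha n mu lam}"

definition weight_polytope :: "(nat \<Rightarrow> 'a::euclidean_space) \<Rightarrow> nat \<Rightarrow> 'a \<Rightarrow> 'a set" where
  "weight_polytope alpha n lam = convex hull ((\<lambda>w. w lam) ` weyl_sub alpha {1..n})"

definition face_F :: "(nat \<Rightarrow> 'a::euclidean_space) \<Rightarrow> nat \<Rightarrow> 'a \<Rightarrow> nat set \<Rightarrow> 'a set" where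
  "face_F alpha n lam I = {x \<in> weight_polytope alpha n lam.
      \<forall>i\<in>I. coef alpha n x i = coef alpha n lam i}"

definition face_P :: "(nat \<Rightarrow> 'a::euclidean_space) \<Rightarrow> nat \<Rightarrow> 'a \<Rightarrow> nat set \<Rightarrow> 'a set" where
  "face_P alpha n lam I = {mu \<in> weights alpha n lam.
      \<forall>i\<in>I. coef alpha n mu i = coef alpha n lam i}"

text \<open>Ibar^0: indices j of the complement of I such that alpha j lies in the connected
  component of the node -lam in the subdiagram of the extended Dynkin diagram induced on
  {alpha j | j in complement of I} \<union> {-lam}. Here -lam is joined to alpha i iff
  (lam, alpha i) > 0, and alpha i, alpha j (i \<noteq> j) are joined iff (alpha i, alpha j) \<noteq> 0.\<close>
inductive_set comp0 :: "(nat \<Rightarrow> 'a::euclidean_space) \<Rightarrow> nat \<Rightarrow> 'a \<Rightarrow> nat set \<Rightarrow> nat set"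
  for alpha n lam I where
  start: "j \<in> {1..n} - I \<Longrightarrow> lam \<bullet> alpha j > 0 \<Longrightarrow> j \<in> comp0 alpha n lam I"
| step: "i \<in> comp0 alpha n lam I \<Longrightarrow> j \<in> {1..n} - I \<Longrightarrow> j \<noteq> i \<Longrightarrow>
          alpha i \<bullet> alpha j \<noteq> 0 \<Longrightarrow> j \<in> comp0 alpha n lam I"

end

theory Submission
  imports Defs
begin


locale RS =
  fixes Phi :: "'a::euclidean_space set" and alpha :: "nat \<Rightarrow> 'a" and n :: nat
  assumes rs: "root_system Phi" and base: "is_base Phi alpha n"
begin

lemma fin_Phi: "finite Phi" using rs unfolding root_system_def by auto
lemma zero_notin: "0 \<notin> Phi" using rs unfolding root_system_def by auto
lemma span_Phi: "span Phi = UNIV" using rs unfolding root_system_def by auto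
lemma refl_Phi: "a \<in> Phi \<Longrightarrow> refl a ` Phi = Phi" using rs unfolding root_system_def by auto
lemma cartan_int: "a \<in> Phi \<Longrightarrow> b \<in> Phi \<Longrightarrow> (2 * (b \<bullet> a)) / (a \<bullet> a) \<in> \<int>"
  using rs unfolding root_system_def by auto
lemma reduced: "a \<in> Phi \<Longrightarrow> c *\<^sub>R a \<in> Phi \<Longrightarrow> c = 1 \<or> c = -1"
  using rs unfolding root_system_def by auto

lemma inj_alpha: "inj_on alpha {1..n}" using base unfolding is_base_def by auto
lemma alpha_Phi: "i \<in> {1..n} \<Longrightarrow> alpha i \<in> Phi" using base unfolding is_base_def by auto
lemma indep: "independent (alpha ` {1..n})" using base unfolding is_base_def by auto
lemma root_repr: "b \<in> Phi \<Longrightarrow> \<exists>c::nat \<Rightarrow> int. b = (\<Sum>i=1..n. of_int (c i) *\<^sub>R alpha i) \<and>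
        ((\<forall>i. c i \<ge> 0) \<or> (\<forall>i. c i \<le> 0))"
  using base unfolding is_base_def by auto

lemma alpha_nz: "i \<in> {1..n} \<Longrightarrow> alpha i \<noteq> 0" using alpha_Phi zero_notin by metis
lemma alpha_sq: "i \<in> {1..n} \<Longrightarrow> alpha i \<bullet> alpha i > 0" using alpha_nz by simp

lemma span_alpha: "span (alpha ` {1..n}) = UNIV"
proof -
  have "Phi \<subseteq> span (alpha ` {1..n})"
  proof
    fix b assume "b \<in> Phi"
    then obtain c :: "nat \<Rightarrow> int" where b: "b = (\<Sum>i=1..n. of_int (c i) *\<^sub>R alpha i)"
      using root_repr by blast
    show "b \<in> span (alpha ` {1..n})" unfolding b
      by (intro span_sum span_scale span_base) auto
  qed
  then have "span Phi \<subseteq> span (alpha ` {1..n})" by (simp add: span_minimal)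
  then show ?thesis using span_Phi by auto
qed

lemma sum_zero_coeffs:
  assumes "(\<Sum>j=1..n. c j *\<^sub>R alpha j) = 0" "i \<in> {1..n}"
  shows "c i = 0"
proof -
  let ?u = "\<lambda>v. c (the_inv_into {1..n} alpha v)"
  have "(\<Sum>v\<in>alpha ` {1..n}. ?u v *\<^sub>R v) = (\<Sum>j=1..n. ?u (alpha j) *\<^sub>R alpha j)"
    by (subst sum.reindex[OF inj_alpha]) auto
  also have "\<dots> = (\<Sum>j=1..n. c j *\<^sub>R alpha j)"
    by (rule sum.cong[OF refl]) (simp only: the_inv_into_f_f[OF inj_alpha])
  finally have "(\<Sum>v\<in>alpha ` {1..n}. ?u v *\<^sub>R v) = 0" using assms(1) by simp
  then have "?u (alpha i) = 0"
  proof -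
    have key: "\<forall>t u v. finite t \<longrightarrow> t \<subseteq> alpha ` {1..n} \<longrightarrow> (\<Sum>v\<in>t. u v *\<^sub>R v) = 0 \<longrightarrow> v \<in> t \<longrightarrow> u v = 0"
      using indep unfolding independent_explicit_module by blast
    show ?thesis
      using key[rule_format, of "alpha ` {1..n}" ?u "alpha i"] assms(2) \<open>(\<Sum>v\<in>alpha ` {1..n}. ?u v *\<^sub>R v) = 0\<close>
      by blast
  qed
  then show ?thesis by (metis the_inv_into_f_f[OF inj_alpha assms(2)])
qed

lemma unique_coeffs:
  assumes "(\<Sum>j=1..n. c j *\<^sub>R alpha j) = (\<Sum>j=1..n. d j *\<^sub>R alpha j)" "i \<in> {1..n}"
  shows "c i = d i"
proof -
  have "(\<Sum>j=1..n. (c j - d j) *\<^sub>R alpha j) = 0"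
    using assms(1) by (simp add: scaleR_diff_left sum_subtractf)
  from sum_zero_coeffs[OF this assms(2)] show ?thesis by simp
qed

lemma exists_coeffs: "\<exists>c. x = (\<Sum>j=1..n. c j *\<^sub>R alpha j) \<and> (\<forall>j. j \<notin> {1..n} \<longrightarrow> c j = 0)"
proof -
  have "x \<in> span (alpha ` {1..n})" using span_alpha by auto
  then obtain u where u: "x = (\<Sum>v\<in>alpha ` {1..n}. u v *\<^sub>R v)"
    using span_finite[of "alpha ` {1..n}"] by auto
  define c where "c j = (if j \<in> {1..n} then u (alpha j) else 0)" for j
  have "x = (\<Sum>j=1..n. u (alpha j) *\<^sub>R alpha j)"
    unfolding u by (subst sum.reindex[OF inj_alpha]) auto
  also have "\<dots> = (\<Sum>j=1..n. c j *\<^sub>R alpha j)" by (intro sum.cong refl) (simp add: c_def)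
  finally have "x = (\<Sum>j=1..n. c j *\<^sub>R alpha j)" .
  moreover have "\<forall>j. j \<notin> {1..n} \<longrightarrow> c j = 0" by (simp add: c_def)
  ultimately show ?thesis by blast
qed

lemma coef_spec: "x = (\<Sum>j=1..n. coef alpha n x j *\<^sub>R alpha j) \<and> (\<forall>j. j \<notin> {1..n} \<longrightarrow> coef alpha n x j = 0)"
proof -
  obtain c where c: "x = (\<Sum>j=1..n. c j *\<^sub>R alpha j) \<and> (\<forall>j. j \<notin> {1..n} \<longrightarrow> c j = 0)"
    using exists_coeffs by blast
  show ?thesis unfolding coef_def
  proof (rule theI[of _ c])
    show "x = (\<Sum>j = 1..n. c j *\<^sub>R alpha j) \<and> (\<forall>j. j \<notin> {1..n} \<longrightarrow> c j = 0)" by (rule c)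
  next
    fix d assume d: "x = (\<Sum>j = 1..n. d j *\<^sub>R alpha j) \<and> (\<forall>j. j \<notin> {1..n} \<longrightarrow> d j = 0)"
    show "d = c"
    proof
      fix j show "d j = c j"
      proof (cases "j \<in> {1..n}")
        case True
        have "(\<Sum>j = 1..n. d j *\<^sub>R alpha j) = (\<Sum>j = 1..n. c j *\<^sub>R alpha j)" using c d by simp
        then show ?thesis using unique_coeffs True by blast
      next
        case False then show ?thesis using c d by simp
      qed
    qed
  qed
qed

lemma coef_repr: "x = (\<Sum>j=1..n. coef alpha n x j *\<^sub>R alpha j)" using coef_spec by blast
lemma coef_out: "j \<notin> {1..n} \<Longrightarrow> coef alpha n x j = 0" using coef_spec by blast

lemma coef_eq: "x = (\<Sum>j=1..n. c j *\<^sub>R alpha j) \<Longrightarrow> j \<in> {1..n} \<Longrightarrow> coef alpha n x j = c j"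
  using unique_coeffs[of "coef alpha n x" c j] coef_repr[of x] by simp

lemma linear_coef: "linear (\<lambda>x. coef alpha n x j)"
proof (cases "j \<in> {1..n}")
  case True
  show ?thesis
  proof (rule linearI)
    fix x y
    have eq: "x + y = (\<Sum>i=1..n. (coef alpha n x i + coef alpha n y i) *\<^sub>R alpha i)"
      by (subst coef_repr[of x], subst coef_repr[of y]) (simp add: scaleR_add_left sum.distrib)
    show "coef alpha n (x + y) j = coef alpha n x j + coef alpha n y j"
      using coef_eq[OF eq True] by simp
  next
    fix r x
    have eq: "r *\<^sub>R x = (\<Sum>i=1..n. (r * coef alpha n x i) *\<^sub>R alpha i)"
      by (subst coef_repr[of x]) (simp add: scaleR_sum_right)
    show "coef alpha n (r *\<^sub>R x) j = r *\<^sub>R coef alpha n x j"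
      using coef_eq[OF eq True] by simp
  qed
next
  case False
  then show ?thesis by (simp add: coef_out linear_zero)
qed

lemma coef_add: "coef alpha n (x + y) j = coef alpha n x j + coef alpha n y j"
  using linear_add[OF linear_coef] by blast
lemma coef_diff: "coef alpha n (x - y) j = coef alpha n x j - coef alpha n y j"
  using linear_diff[OF linear_coef] by blast
lemma coef_scale: "coef alpha n (r *\<^sub>R x) j = r * coef alpha n x j"
  using linear_scale[OF linear_coef] by simp
lemma coef_minus: "coef alpha n (- x) j = - coef alpha n x j"
  using linear_neg[OF linear_coef] by blast
lemma coef_zero: "coef alpha n 0 j = 0"
  using linear_0[OF linear_coef] by blast
lemma coef_sum: "coef alpha n (\<Sum>x\<in>S. f x) j = (\<Sum>x\<in>S. coef alpha n (f x) j)"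
  using linear_sum[OF linear_coef] by blast

lemma coef_alpha: "i \<in> {1..n} \<Longrightarrow> coef alpha n (alpha i) j = (if j = i then 1 else 0)"
proof (cases "j \<in> {1..n}")
  case True
  assume i: "i \<in> {1..n}"
  have "(\<Sum>k=1..n. (if k = i then 1 else 0) *\<^sub>R alpha k) = (\<Sum>k=1..n. if k = i then alpha k else 0)"
    by (intro sum.cong) auto
  also have "\<dots> = alpha i" using i by (simp add: sum.delta')
  finally have eq: "alpha i = (\<Sum>k=1..n. (if k = i then 1 else 0) *\<^sub>R alpha k)" by (rule sym)
  show ?thesis using coef_eq[OF eq True] by simp
next
  case False
  assume "i \<in> {1..n}" then show ?thesis using False coef_out by auto
qed

end


lemma refl_linear: "linear (refl a)"
  unfolding refl_def by (intro linearI) (auto simp: inner_add_left scaleR_add_left algebra_simps add_divide_distrib diff_divide_distrib)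

lemma refl_zero[simp]: "refl 0 x = x" unfolding refl_def by simp

lemma refl_inner_a: "a \<noteq> 0 \<Longrightarrow> refl a x \<bullet> a = - (x \<bullet> a)"
  unfolding refl_def by (simp add: inner_diff_left)

lemma refl_refl[simp]: "refl a (refl a x) = x"
proof (cases "a = 0")
  case False
  have "refl a (refl a x) = refl a x - ((2 * (- (x \<bullet> a))) / (a \<bullet> a)) *\<^sub>R a"
    unfolding refl_def[of a "refl a x"] using refl_inner_a[OF False] by simp
  also have "\<dots> = x" unfolding refl_def by (simp add: algebra_simps)
  finally show ?thesis .
qed simp

lemma refl_refl_comp: "refl a \<circ> refl a = id" by (rule ext) simp

lemma refl_inner: "refl a x \<bullet> refl a y = x \<bullet> y"
proof (cases "a = 0")
  case False
  then have aa: "a \<bullet> a \<noteq> 0" by simp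
  define cx where "cx = (2 * (x \<bullet> a)) / (a \<bullet> a)"
  define cy where "cy = (2 * (y \<bullet> a)) / (a \<bullet> a)"
  have "refl a x \<bullet> refl a y = x \<bullet> y - cy * (x \<bullet> a) - cx * (y \<bullet> a) + cx * cy * (a \<bullet> a)"
    unfolding refl_def cx_def[symmetric] cy_def[symmetric]
    by (simp add: inner_diff_left inner_diff_right inner_commute algebra_simps)
  also have "\<dots> = x \<bullet> y" unfolding cx_def cy_def using aa by (simp add: field_simps)
  finally show ?thesis .
qed simp

lemma refl_comm: "a \<bullet> b = 0 \<Longrightarrow> refl a (refl b x) = refl b (refl a x)"
  unfolding refl_def by (simp add: inner_diff_left inner_commute algebra_simps)

definition orth :: "('a::euclidean_space \<Rightarrow> 'a) \<Rightarrow> bool" where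
  "orth w \<longleftrightarrow> linear w \<and> (\<forall>x y. w x \<bullet> w y = x \<bullet> y)"

lemma orth_refl: "orth (refl a)" unfolding orth_def using refl_linear refl_inner by blast
lemma orth_id: "orth id" unfolding orth_def by (simp add: linear_id)
lemma orth_comp: "orth v \<Longrightarrow> orth w \<Longrightarrow> orth (v \<circ> w)"
  unfolding orth_def by (auto intro: linear_compose)

lemma refl_conj:
  assumes "orth w" shows "refl (w a) (w x) = w (refl a x)"
proof -
  have l: "linear w" and ip: "\<And>x y. w x \<bullet> w y = x \<bullet> y" using assms unfolding orth_def by auto
  show ?thesis unfolding refl_def
    by (simp add: ip linear_diff[OF l] linear_scale[OF l])
qed

definition wd :: "(nat \<Rightarrow> 'a::euclidean_space) \<Rightarrow> nat list \<Rightarrow> 'a \<Rightarrow> 'a" where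
  "wd alpha js = foldr (\<lambda>j f. refl (alpha j) \<circ> f) js id"

lemma wd_Nil[simp]: "wd alpha [] = id" unfolding wd_def by simp
lemma wd_Cons[simp]: "wd alpha (j # js) = refl (alpha j) \<circ> wd alpha js" unfolding wd_def by simp
lemma wd_append: "wd alpha (xs @ ys) = wd alpha xs \<circ> wd alpha ys"
  by (induction xs) (auto simp: comp_assoc)
lemma wd_snoc: "wd alpha (xs @ [j]) = wd alpha xs \<circ> refl (alpha j)"
  by (simp add: wd_append)
lemma orth_wd: "orth (wd alpha js)"
proof (induction js)
  case Nil show ?case by (metis wd_Nil orth_id)
next
  case (Cons j js) then show ?case by (metis wd_Cons orth_comp orth_refl)
qed
lemma linear_wd: "linear (wd alpha js)" using orth_wd unfolding orth_def by blast
lemma inner_wd: "wd alpha js x \<bullet> wd alpha js y = x \<bullet> y" using orth_wd unfolding orth_def by blast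
lemma wd_rev: "wd alpha (rev js) \<circ> wd alpha js = id"
proof (induction js)
  case (Cons j js)
  have "wd alpha (rev (j # js)) \<circ> wd alpha (j # js)
      = wd alpha (rev js) \<circ> (refl (alpha j) \<circ> refl (alpha j)) \<circ> wd alpha js"
    by (simp add: wd_snoc comp_assoc)
  also have "\<dots> = id" by (simp only: refl_refl_comp comp_id Cons.IH)
  finally show ?case .
qed simp

lemma weyl_sub_wd: "w \<in> weyl_sub alpha J \<longleftrightarrow> (\<exists>js. set js \<subseteq> J \<and> w = wd alpha js)"
proof
  assume "w \<in> weyl_sub alpha J"
  then show "\<exists>js. set js \<subseteq> J \<and> w = wd alpha js"
  proof induction
    case id then show ?case by (intro exI[of _ "[]"]) simp
  next
    case (step w j)
    then obtain js where "set js \<subseteq> J" "w = wd alpha js" by blast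
    then show ?case using step by (intro exI[of _ "j # js"]) simp
  qed
next
  assume "\<exists>js. set js \<subseteq> J \<and> w = wd alpha js"
  then obtain js where js: "set js \<subseteq> J" "w = wd alpha js" by blast
  have "set js \<subseteq> J \<Longrightarrow> wd alpha js \<in> weyl_sub alpha J"
    by (induction js) (auto intro: weyl_sub.intros)
  then show "w \<in> weyl_sub alpha J" using js by simp
qed

lemma wd_in: "set js \<subseteq> J \<Longrightarrow> wd alpha js \<in> weyl_sub alpha J"
  using weyl_sub_wd by blast

lemma weyl_sub_orth: "w \<in> weyl_sub alpha J \<Longrightarrow> orth w"
  using weyl_sub_wd orth_wd by metis
lemma weyl_sub_linear: "w \<in> weyl_sub alpha J \<Longrightarrow> linear w"
  using weyl_sub_orth orth_def by blast
lemma weyl_sub_inner: "w \<in> weyl_sub alpha J \<Longrightarrow> w x \<bullet> w y = x \<bullet> y"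
  using weyl_sub_orth orth_def by blast

lemma weyl_sub_mono: "J \<subseteq> K \<Longrightarrow> weyl_sub alpha J \<subseteq> weyl_sub alpha K"
proof
  fix w assume "J \<subseteq> K" "w \<in> weyl_sub alpha J"
  then obtain js where "set js \<subseteq> J" "w = wd alpha js" using weyl_sub_wd by metis
  then show "w \<in> weyl_sub alpha K" using wd_in[of js K alpha] \<open>J \<subseteq> K\<close> by auto
qed

lemma weyl_sub_comp: "v \<in> weyl_sub alpha J \<Longrightarrow> w \<in> weyl_sub alpha J \<Longrightarrow> v \<circ> w \<in> weyl_sub alpha J"
proof -
  assume "v \<in> weyl_sub alpha J" "w \<in> weyl_sub alpha J"
  then obtain xs ys where "set xs \<subseteq> J" "v = wd alpha xs" "set ys \<subseteq> J" "w = wd alpha ys"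
    using weyl_sub_wd by metis
  then show ?thesis using wd_in[of "xs @ ys" J alpha] by (simp add: wd_append)
qed

lemma weyl_sub_inv: "v \<in> weyl_sub alpha J \<Longrightarrow> \<exists>v'\<in>weyl_sub alpha J. v' \<circ> v = id"
proof -
  assume "v \<in> weyl_sub alpha J"
  then obtain xs where "set xs \<subseteq> J" "v = wd alpha xs" using weyl_sub_wd by metis
  then show ?thesis using wd_in[of "rev xs" J alpha] wd_rev[of alpha xs] by auto
qed

lemma weyl_sub_refl: "j \<in> J \<Longrightarrow> refl (alpha j) \<in> weyl_sub alpha J"
  using weyl_sub.step[OF weyl_sub.id, of j J alpha] by simp

context RS begin

definition pos :: "'a \<Rightarrow> bool" where "pos x \<longleftrightarrow> (\<forall>i\<in>{1..n}. coef alpha n x i \<ge> 0)"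
definition neg :: "'a \<Rightarrow> bool" where "neg x \<longleftrightarrow> (\<forall>i\<in>{1..n}. coef alpha n x i \<le> 0)"

lemma pos_add: "pos x \<Longrightarrow> pos y \<Longrightarrow> pos (x + y)" unfolding pos_def by (simp add: coef_add)
lemma pos_scale: "pos x \<Longrightarrow> c \<ge> 0 \<Longrightarrow> pos (c *\<^sub>R x)" unfolding pos_def by (simp add: coef_scale)
lemma pos_zero: "pos 0" unfolding pos_def by (simp add: coef_zero)
lemma pos_alpha: "i \<in> {1..n} \<Longrightarrow> pos (alpha i)" unfolding pos_def by (simp add: coef_alpha)

lemma coef_refl: "i \<in> {1..n} \<Longrightarrow> coef alpha n (refl (alpha i) x) j =
   coef alpha n x j - (if j = i then (2 * (x \<bullet> alpha i)) / (alpha i \<bullet> alpha i) else 0)"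
  unfolding refl_def by (simp add: coef_diff coef_scale coef_alpha)

lemma wd_Phi: "set js \<subseteq> {1..n} \<Longrightarrow> b \<in> Phi \<Longrightarrow> wd alpha js b \<in> Phi"
proof (induction js)
  case (Cons j js)
  then have "wd alpha js b \<in> Phi" "alpha j \<in> Phi" using alpha_Phi by auto
  then show ?case using refl_Phi by auto
qed simp

lemma root_sign: "b \<in> Phi \<Longrightarrow> pos b \<or> neg b"
proof -
  assume b: "b \<in> Phi"
  then obtain c :: "nat \<Rightarrow> int" where c: "b = (\<Sum>i=1..n. of_int (c i) *\<^sub>R alpha i)"
     "(\<forall>i. c i \<ge> 0) \<or> (\<forall>i. c i \<le> 0)" using root_repr by blast
  have "\<And>i. i \<in> {1..n} \<Longrightarrow> coef alpha n b i = of_int (c i)" using coef_eq[OF c(1)] by blast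
  then show ?thesis using c(2) unfolding pos_def neg_def by auto
qed

lemma root_not_both: "b \<in> Phi \<Longrightarrow> pos b \<Longrightarrow> neg b \<Longrightarrow> False"
proof -
  assume "b \<in> Phi" "pos b" "neg b"
  then have "\<forall>i\<in>{1..n}. coef alpha n b i = 0" unfolding pos_def neg_def by force
  then have "b = 0" using coef_repr[of b] by simp
  then show False using \<open>b \<in> Phi\<close> zero_notin by simp
qed

lemma refl_pos_neg:
  assumes i: "i \<in> {1..n}" and b: "b \<in> Phi" "pos b" and nb: "neg (refl (alpha i) b)"
  shows "b = alpha i"
proof -
  have z: "coef alpha n b j = 0" if "j \<in> {1..n}" "j \<noteq> i" for j
    using that b(2) nb coef_refl[OF i, of b j] unfolding pos_def neg_def by force
  have "b = (\<Sum>j=1..n. coef alpha n b j *\<^sub>R alpha j)" by (rule coef_repr)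
  also have "\<dots> = (\<Sum>j=1..n. if j = i then coef alpha n b i *\<^sub>R alpha i else 0)"
    by (intro sum.cong refl) (auto simp: z)
  also have "\<dots> = coef alpha n b i *\<^sub>R alpha i" using i by (simp add: sum.delta')
  finally have bb: "b = coef alpha n b i *\<^sub>R alpha i" .
  then have "coef alpha n b i = 1 \<or> coef alpha n b i = -1" using reduced[OF alpha_Phi[OF i]] b(1) by metis
  moreover have "coef alpha n b i \<ge> 0" using b(2) i unfolding pos_def by blast
  ultimately show ?thesis using bb by auto
qed

lemma deletion:
  "set js \<subseteq> {1..n} \<Longrightarrow> j \<in> {1..n} \<Longrightarrow> neg (wd alpha js (alpha j)) \<Longrightarrow>
   \<exists>js'. set js' \<subseteq> set js \<and> Suc (length js') = length js \<and> wd alpha js \<circ> refl (alpha j) = wd alpha js'"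
proof (induction js)
  case Nil
  then show ?case using root_not_both[OF alpha_Phi pos_alpha] by auto
next
  case (Cons i rest)
  have i: "i \<in> {1..n}" and rest: "set rest \<subseteq> {1..n}" using Cons.prems by auto
  define b where "b = wd alpha rest (alpha j)"
  have bP: "b \<in> Phi" unfolding b_def using wd_Phi[OF rest alpha_Phi[OF Cons.prems(2)]] .
  show ?case
  proof (cases "neg b")
    case True
    then obtain js' where js': "set js' \<subseteq> set rest" "Suc (length js') = length rest"
      "wd alpha rest \<circ> refl (alpha j) = wd alpha js'"
      using Cons.IH[OF rest Cons.prems(2)] unfolding b_def by blast
    have "wd alpha (i # rest) \<circ> refl (alpha j) = wd alpha (i # js')"
      by (metis js'(3) comp_assoc wd_Cons)
    moreover have "set (i#js') \<subseteq> set (i#rest)" using js'(1) by auto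
    moreover have "Suc (length (i#js')) = length (i#rest)" using js'(2) by simp
    ultimately show ?thesis by blast
  next
    case False
    then have "pos b" using root_sign[OF bP] by blast
    moreover have "neg (refl (alpha i) b)" using Cons.prems(3) unfolding b_def by simp
    ultimately have bi: "b = alpha i" using refl_pos_neg[OF i bP] by blast
    have "wd alpha (i # rest) \<circ> refl (alpha j) = wd alpha rest"
    proof
      fix x
      have "refl (alpha i) (wd alpha rest (refl (alpha j) x)) = wd alpha rest (refl (alpha j) (refl (alpha j) x))"
        using refl_conj[OF orth_wd[of alpha rest], of "alpha j" "refl (alpha j) x"] bi unfolding b_def by simp
      then show "(wd alpha (i # rest) \<circ> refl (alpha j)) x = wd alpha rest x" by simp
    qed
    moreover have "set rest \<subseteq> set (i#rest)" by auto
    moreover have "Suc (length rest) = length (i#rest)" by simp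
    ultimately show ?thesis by blast
  qed
qed

definition reduced_word :: "nat set \<Rightarrow> nat list \<Rightarrow> bool" where
  "reduced_word J js \<longleftrightarrow> set js \<subseteq> J \<and>
     (\<forall>ks. set ks \<subseteq> J \<and> wd alpha ks = wd alpha js \<longrightarrow> length js \<le> length ks)"

lemma reduced_exists: "w \<in> weyl_sub alpha J \<Longrightarrow> \<exists>js. reduced_word J js \<and> wd alpha js = w"
proof -
  assume "w \<in> weyl_sub alpha J"
  then obtain js0 where "set js0 \<subseteq> J \<and> wd alpha js0 = w" using weyl_sub_wd by metis
  from ex_has_least_nat[of "\<lambda>js. set js \<subseteq> J \<and> wd alpha js = w", OF this, of length]
  obtain js where "set js \<subseteq> J \<and> wd alpha js = w"
    "\<forall>ks. set ks \<subseteq> J \<and> wd alpha ks = w \<longrightarrow> length js \<le> length ks" by blast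
  then show ?thesis unfolding reduced_word_def by metis
qed

lemma reduced_prefix: "reduced_word J (xs @ ys) \<Longrightarrow> reduced_word J xs"
proof -
  assume r: "reduced_word J (xs @ ys)"
  show ?thesis unfolding reduced_word_def
  proof (intro conjI allI impI)
    show "set xs \<subseteq> J" using r unfolding reduced_word_def by auto
  next
    fix ks assume ks: "set ks \<subseteq> J \<and> wd alpha ks = wd alpha xs"
    then have "set (ks @ ys) \<subseteq> J \<and> wd alpha (ks @ ys) = wd alpha (xs @ ys)"
      using r unfolding reduced_word_def by (auto simp: wd_append)
    then have "length (xs @ ys) \<le> length (ks @ ys)" using r unfolding reduced_word_def by blast
    then show "length xs \<le> length ks" by simp
  qed
qed

lemma reduced_last_pos:
  assumes r: "reduced_word J (xs @ [j])" and J: "J \<subseteq> {1..n}"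
  shows "pos (wd alpha xs (alpha j))"
proof (rule ccontr)
  assume np: "\<not> pos (wd alpha xs (alpha j))"
  have xs: "set xs \<subseteq> {1..n}" and j: "j \<in> {1..n}" using r J unfolding reduced_word_def by auto
  have "neg (wd alpha xs (alpha j))" using root_sign[OF wd_Phi[OF xs alpha_Phi[OF j]]] np by blast
  then obtain js' where js': "set js' \<subseteq> set xs" "Suc (length js') = length xs"
    "wd alpha xs \<circ> refl (alpha j) = wd alpha js'" using deletion[OF xs j] by blast
  have "set js' \<subseteq> J" using js'(1) r unfolding reduced_word_def by auto
  moreover have "wd alpha js' = wd alpha (xs @ [j])" using js'(3) by (simp add: wd_snoc)
  ultimately have "length (xs @ [j]) \<le> length js'" using r unfolding reduced_word_def by blast
  then show False using js'(2) by simp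
qed

definition dom :: "'a \<Rightarrow> bool" where "dom x \<longleftrightarrow> (\<forall>i\<in>{1..n}. x \<bullet> alpha i \<ge> 0)"

lemma reduced_dom_pos:
  "reduced_word J js \<Longrightarrow> J \<subseteq> {1..n} \<Longrightarrow> dom x \<Longrightarrow> pos (x - wd alpha js x)"
proof (induction js rule: rev_induct)
  case Nil then show ?case by (simp add: pos_zero)
next
  case (snoc j xs)
  have j: "j \<in> {1..n}" using snoc.prems unfolding reduced_word_def by auto
  have p1: "pos (x - wd alpha xs x)" using snoc reduced_prefix by blast
  define c where "c = (2 * (x \<bullet> alpha j)) / (alpha j \<bullet> alpha j)"
  have c: "c \<ge> 0" unfolding c_def using snoc.prems(3) j alpha_sq[OF j] unfolding dom_def by auto
  have "x - wd alpha (xs @ [j]) x = (x - wd alpha xs x) + wd alpha xs (x - refl (alpha j) x)"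
    by (simp add: wd_snoc linear_diff[OF linear_wd])
  also have "\<dots> = (x - wd alpha xs x) + c *\<^sub>R wd alpha xs (alpha j)"
    unfolding refl_def c_def by (simp add: linear_scale[OF linear_wd])
  finally have eq: "x - wd alpha (xs @ [j]) x = (x - wd alpha xs x) + c *\<^sub>R wd alpha xs (alpha j)" .
  show ?case unfolding eq
    using pos_add[OF p1 pos_scale[OF reduced_last_pos[OF snoc.prems(1,2)] c]] .
qed

lemma dom_pos: "w \<in> weyl_sub alpha J \<Longrightarrow> J \<subseteq> {1..n} \<Longrightarrow> dom x \<Longrightarrow> pos (x - w x)"
  using reduced_exists reduced_dom_pos by metis

end


context RS begin

lemma weyl_Phi: "w \<in> weyl_sub alpha J \<Longrightarrow> J \<subseteq> {1..n} \<Longrightarrow> b \<in> Phi \<Longrightarrow> w b \<in> Phi"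
  using weyl_sub_wd wd_Phi by (metis order_trans)

lemma finite_weyl: assumes J: "J \<subseteq> {1..n}" shows "finite (weyl_sub alpha J)"
proof -
  let ?r = "\<lambda>w. restrict w Phi"
  have inj: "inj_on ?r (weyl_sub alpha J)"
  proof (rule inj_onI)
    fix v w assume v: "v \<in> weyl_sub alpha J" and w: "w \<in> weyl_sub alpha J" and eq: "?r v = ?r w"
    have "\<And>x. x \<in> Phi \<Longrightarrow> v x = w x" using eq by (metis restrict_apply')
    then show "v = w"
      using linear_eq_on[OF weyl_sub_linear[OF v] weyl_sub_linear[OF w]] span_Phi by blast
  qed
  have "?r ` weyl_sub alpha J \<subseteq> Phi \<rightarrow>\<^sub>E Phi"
    using weyl_Phi[OF _ J] by auto
  moreover have "finite (Phi \<rightarrow>\<^sub>E Phi)" using fin_Phi by (simp add: finite_PiE)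
  ultimately have "finite (?r ` weyl_sub alpha J)" using finite_subset by blast
  then show ?thesis using finite_imageD[OF _ inj] by blast
qed

definition hsum :: "'a \<Rightarrow> real" where "hsum z = (\<Sum>i=1..n. coef alpha n z i)"

lemma hsum_refl: "j \<in> {1..n} \<Longrightarrow> hsum (refl (alpha j) z) = hsum z - (2 * (z \<bullet> alpha j)) / (alpha j \<bullet> alpha j)"
proof -
  assume j: "j \<in> {1..n}"
  have "hsum (refl (alpha j) z) = (\<Sum>i=1..n. coef alpha n z i - (if i = j then (2 * (z \<bullet> alpha j)) / (alpha j \<bullet> alpha j) else 0))"
    unfolding hsum_def by (intro sum.cong refl) (simp add: coef_refl[OF j])
  also have "\<dots> = hsum z - (2 * (z \<bullet> alpha j)) / (alpha j \<bullet> alpha j)"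
    unfolding hsum_def sum_subtractf using j by (simp add: sum.delta)
  finally show ?thesis .
qed

lemma dom_rep:
  assumes L: "L \<subseteq> {1..n}"
  shows "\<exists>v\<in>weyl_sub alpha L. \<forall>j\<in>L. v y \<bullet> alpha j \<ge> 0"
proof -
  define Orb where "Orb = (\<lambda>v. v y) ` weyl_sub alpha L"
  have fOrb: "finite Orb" unfolding Orb_def using finite_weyl[OF L] by simp
  have neOrb: "Orb \<noteq> {}" unfolding Orb_def using weyl_sub.id by blast
  define M where "M = Max (hsum ` Orb)"
  have "M \<in> hsum ` Orb" unfolding M_def using fOrb neOrb by simp
  then obtain z where zO: "z \<in> Orb" and hz: "hsum z = M" by blast
  have maxz: "hsum z' \<le> hsum z" if "z' \<in> Orb" for z'
    unfolding hz M_def using fOrb that by simp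
  obtain v where v: "v \<in> weyl_sub alpha L" and zv: "z = v y" using zO unfolding Orb_def by blast
  have "\<forall>j\<in>L. z \<bullet> alpha j \<ge> 0"
  proof (rule ccontr)
    assume "\<not> (\<forall>j\<in>L. z \<bullet> alpha j \<ge> 0)"
    then obtain j where jL: "j \<in> L" and neg: "z \<bullet> alpha j < 0" by force
    have j: "j \<in> {1..n}" using jL L by auto
    have "refl (alpha j) z \<in> Orb" unfolding Orb_def zv
      using weyl_sub.step[OF v jL] by (metis comp_apply image_eqI)
    then have "hsum (refl (alpha j) z) \<le> hsum z" by (rule maxz)
    moreover have "(2 * (z \<bullet> alpha j)) / (alpha j \<bullet> alpha j) < 0"
      using neg alpha_sq[OF j] by (simp add: divide_neg_pos)
    ultimately show False using hsum_refl[OF j] by simp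
  qed
  then show ?thesis using v zv by blast
qed

lemma support_span: "w \<in> weyl_sub alpha J \<Longrightarrow> x - w x \<in> span (alpha ` J)"
proof (induction rule: weyl_sub.induct)
  case id then show ?case by (simp add: span_zero)
next
  case (step w j)
  have "x - (refl (alpha j) \<circ> w) x = (x - w x) + ((2 * (w x \<bullet> alpha j)) / (alpha j \<bullet> alpha j)) *\<^sub>R alpha j"
    unfolding refl_def by simp
  also have "\<dots> \<in> span (alpha ` J)"
    by (rule span_add[OF step.IH span_scale[OF span_base]]) (use step in auto)
  finally show ?case .
qed

lemma coef_span_zero:
  assumes y: "y \<in> span (alpha ` J)" and J: "J \<subseteq> {1..n}" and i: "i \<notin> J"
  shows "coef alpha n y i = 0"
proof -
  have fin: "finite (alpha ` J)" using J finite_subset by (metis finite_atLeastAtMost finite_imageI)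
  obtain u where u: "y = (\<Sum>v\<in>alpha ` J. u v *\<^sub>R v)" using y span_finite[OF fin] by auto
  have "coef alpha n y i = (\<Sum>v\<in>alpha ` J. u v * coef alpha n v i)"
    unfolding u by (simp add: coef_sum coef_scale)
  also have "\<dots> = 0"
  proof (rule sum.neutral, rule ballI)
    fix v assume "v \<in> alpha ` J"
    then obtain j where "j \<in> J" "v = alpha j" by blast
    moreover have "j \<in> {1..n}" "i \<noteq> j" using J i \<open>j \<in> J\<close> by auto
    ultimately show "u v * coef alpha n v i = 0" using coef_alpha[of j i] by simp
  qed
  finally show ?thesis .
qed

lemma support_coef: "w \<in> weyl_sub alpha J \<Longrightarrow> J \<subseteq> {1..n} \<Longrightarrow> i \<notin> J \<Longrightarrow> coef alpha n (w x) i = coef alpha n x i"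
  using coef_span_zero[OF support_span] coef_diff by (metis eq_iff_diff_eq_0)

lemma pos_inner_dom:
  assumes "pos b" "\<And>i. i \<in> L \<Longrightarrow> z \<bullet> alpha i \<ge> 0" "\<And>i. i \<in> {1..n} \<Longrightarrow> i \<notin> L \<Longrightarrow> coef alpha n b i = 0"
  shows "z \<bullet> b \<ge> 0"
proof -
  have "z \<bullet> b = (\<Sum>i=1..n. coef alpha n b i * (z \<bullet> alpha i))"
    by (subst coef_repr[of b]) (simp add: inner_sum_right)
  also have "\<dots> \<ge> 0"
  proof (rule sum_nonneg)
    fix i assume i: "i \<in> {1..n}"
    show "coef alpha n b i * (z \<bullet> alpha i) \<ge> 0"
    proof (cases "i \<in> L")
      case True then show ?thesis using assms(1,2) i unfolding pos_def by simp
    next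
      case False then show ?thesis using assms(3) i by simp
    qed
  qed
  finally show ?thesis .
qed

lemma weyl_sub_inv2: "v \<in> weyl_sub alpha J \<Longrightarrow> \<exists>v'\<in>weyl_sub alpha J. v' \<circ> v = id \<and> v \<circ> v' = id"
proof -
  assume "v \<in> weyl_sub alpha J"
  then obtain xs where "set xs \<subseteq> J" "v = wd alpha xs" using weyl_sub_wd by metis
  then show ?thesis using wd_in[of "rev xs" J alpha] wd_rev[of alpha xs] wd_rev[of alpha "rev xs"] by auto
qed

lemma orbit_face:
  assumes L: "L \<subseteq> {1..n}" and x: "dom x" and w: "w \<in> weyl_sub alpha {1..n}"
    and eq: "\<And>i. i \<in> {1..n} \<Longrightarrow> i \<notin> L \<Longrightarrow> coef alpha n (w x) i = coef alpha n x i"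
  shows "\<exists>v\<in>weyl_sub alpha L. w x = v x"
proof -
  obtain v where v: "v \<in> weyl_sub alpha L" and vd: "\<forall>j\<in>L. v (w x) \<bullet> alpha j \<ge> 0"
    using dom_rep[OF L, of "w x"] by blast
  define z where "z = v (w x)"
  define b where "b = x - z"
  have vW: "v \<in> weyl_sub alpha {1..n}" using v weyl_sub_mono[OF L] by blast
  have vw: "v \<circ> w \<in> weyl_sub alpha {1..n}" using weyl_sub_comp[OF vW w] .
  have pb: "pos b" unfolding b_def z_def using dom_pos[OF vw _ x] by simp
  have b0: "coef alpha n b i = 0" if "i \<in> {1..n}" "i \<notin> L" for i
    unfolding b_def z_def using support_coef[OF v L that(2), of "w x"] eq[OF that] coef_diff by simp
  have zb: "z \<bullet> b \<ge> 0" using pos_inner_dom[OF pb _ b0] vd unfolding z_def by blast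
  have "x \<bullet> x = z \<bullet> z" unfolding z_def using weyl_sub_inner[OF vw, of x x] by simp
  moreover have "x = z + b" unfolding b_def by simp
  ultimately have "z \<bullet> z = z \<bullet> z + 2 * (z \<bullet> b) + b \<bullet> b"
    by (metis inner_add_left inner_add_right inner_commute mult_2 add.assoc)
  then have "b \<bullet> b \<le> 0" using zb by linarith
  then have "b = 0" by (metis inner_eq_zero_iff inner_ge_zero order_antisym)
  then have zx: "v (w x) = x" unfolding b_def z_def by simp
  obtain v' where v': "v' \<in> weyl_sub alpha L" "v' \<circ> v = id" using weyl_sub_inv[OF v] by blast
  have "w x = v' x" using zx v'(2) by (metis comp_apply id_apply)
  then show ?thesis using v'(1) by blast
qed

definition intc :: "'a \<Rightarrow> bool" where "intc x \<longleftrightarrow> (\<forall>i\<in>{1..n}. coef alpha n x i \<in> \<int>)"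

lemma intc_add: "intc x \<Longrightarrow> intc y \<Longrightarrow> intc (x + y)" unfolding intc_def by (simp add: coef_add)
lemma intc_diff: "intc x \<Longrightarrow> intc y \<Longrightarrow> intc (x - y)" unfolding intc_def by (simp add: coef_diff)
lemma intc_scale: "c \<in> \<int> \<Longrightarrow> j \<in> {1..n} \<Longrightarrow> intc (c *\<^sub>R alpha j)"
  unfolding intc_def by (simp add: coef_scale coef_alpha coef_out)
lemma intc_zero: "intc 0" unfolding intc_def by (simp add: coef_zero)

lemma intc_pair:
  assumes y: "intc y" and j: "j \<in> {1..n}"
  shows "(2 * (y \<bullet> alpha j)) / (alpha j \<bullet> alpha j) \<in> \<int>"
proof -
  have e: "y \<bullet> alpha j = (\<Sum>i=1..n. coef alpha n y i * (alpha i \<bullet> alpha j))"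
    by (subst coef_repr[of y]) (simp add: inner_sum_left)
  have "(2 * (y \<bullet> alpha j)) / (alpha j \<bullet> alpha j)
      = (\<Sum>i=1..n. coef alpha n y i * ((2 * (alpha i \<bullet> alpha j)) / (alpha j \<bullet> alpha j)))"
    unfolding e by (simp add: sum_distrib_left sum_divide_distrib field_simps)
  also have "\<dots> \<in> \<int>"
    using y cartan_int[OF alpha_Phi[OF j] alpha_Phi] unfolding intc_def by (intro Ints_sum Ints_mult) auto
  finally show ?thesis .
qed

definition intw :: "'a \<Rightarrow> bool" where
  "intw x \<longleftrightarrow> (\<forall>i\<in>{1..n}. (2 * (x \<bullet> alpha i)) / (alpha i \<bullet> alpha i) \<in> \<int>)"

lemma weyl_intc:
  assumes "w \<in> weyl_sub alpha J" "J \<subseteq> {1..n}" "intw x"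
  shows "intc (x - w x)"
  using assms(1)
proof (induction rule: weyl_sub.induct)
  case id then show ?case by (simp add: intc_zero)
next
  case (step w j)
  have j: "j \<in> {1..n}" using step assms(2) by auto
  have c: "(2 * (w x \<bullet> alpha j)) / (alpha j \<bullet> alpha j) =
     (2 * (x \<bullet> alpha j)) / (alpha j \<bullet> alpha j) - (2 * ((x - w x) \<bullet> alpha j)) / (alpha j \<bullet> alpha j)"
    by (simp add: inner_diff_left diff_divide_distrib algebra_simps)
  have "(2 * (w x \<bullet> alpha j)) / (alpha j \<bullet> alpha j) \<in> \<int>"
    unfolding c using assms(3) j intc_pair[OF step.IH j] unfolding intw_def by (intro Ints_diff) auto
  moreover have eq: "x - (refl (alpha j) \<circ> w) x = (x - w x) + ((2 * (w x \<bullet> alpha j)) / (alpha j \<bullet> alpha j)) *\<^sub>R alpha j"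
    unfolding refl_def by simp
  ultimately show ?case unfolding eq using intc_add[OF step.IH intc_scale[OF _ j]] by blast
qed

lemma pos_sum: "(\<And>j. j \<in> A \<Longrightarrow> pos (f j)) \<Longrightarrow> pos (sum f A)"
  unfolding pos_def by (simp add: coef_sum sum_nonneg)

lemma dom_inner_pos: "dom z \<Longrightarrow> pos b \<Longrightarrow> z \<bullet> b \<ge> 0"
  using pos_inner_dom[of b "{1..n}" z] unfolding dom_def by auto

lemma hull_dom:
  assumes lam: "dom lam" and nu: "dom nu" and p: "pos (lam - nu)"
  shows "nu \<in> convex hull ((\<lambda>w. w lam) ` weyl_sub alpha {1..n})"
proof (rule ccontr)
  let ?S = "(\<lambda>w. w lam) ` weyl_sub alpha {1..n}"
  assume nin: "nu \<notin> convex hull ?S"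
  have fS: "finite ?S" using finite_weyl by simp
  obtain a b where ab: "a \<bullet> nu < b" "\<forall>x\<in>convex hull ?S. b < a \<bullet> x"
    using separating_hyperplane_closed_point[OF convex_convex_hull
        compact_imp_closed[OF finite_imp_compact_convex_hull[OF fS]] nin] by blast
  define y where "y = - a"
  obtain v where v: "v \<in> weyl_sub alpha {1..n}" and vd: "\<forall>j\<in>{1..n}. v y \<bullet> alpha j \<ge> 0"
    using dom_rep[of "{1..n}" y] by blast
  have dy: "dom (v y)" unfolding dom_def using vd by blast
  obtain v' where v': "v' \<in> weyl_sub alpha {1..n}" "v' \<circ> v = id" using weyl_sub_inv[OF v] by blast
  have "y \<bullet> nu = v y \<bullet> v nu" using weyl_sub_inner[OF v] by simp
  also have "\<dots> \<le> v y \<bullet> nu"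
  proof -
    have "v y \<bullet> (nu - v nu) \<ge> 0" using dom_inner_pos[OF dy dom_pos[OF v _ nu]] by simp
    then show ?thesis by (simp add: inner_diff_right)
  qed
  also have "\<dots> \<le> v y \<bullet> lam"
    using dom_inner_pos[OF dy p] by (simp add: inner_diff_right)
  also have "\<dots> = v' (v y) \<bullet> v' lam" using weyl_sub_inner[OF v'(1)] by simp
  also have "\<dots> = y \<bullet> v' lam" using v'(2) by (metis comp_apply id_apply)
  also have "\<dots> < - b"
  proof -
    have "v' lam \<in> convex hull ?S" using v'(1) by (intro hull_inc) blast
    then show ?thesis using ab(2) unfolding y_def by force
  qed
  finally show False using ab(1) unfolding y_def by simp
qed

lemma length_gt:
  assumes J: "J \<subseteq> {1..n}" and w: "w \<in> weyl_sub alpha J" and j: "j \<in> J"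
    and p: "pos (w (alpha j))"
  shows "weyl_length alpha J w < weyl_length alpha J (w \<circ> refl (alpha j))"
proof -
  have wj: "w \<circ> refl (alpha j) \<in> weyl_sub alpha J"
    using weyl_sub_comp[OF w weyl_sub_refl[OF j]] .
  obtain ks where ks: "reduced_word J ks" "wd alpha ks = w \<circ> refl (alpha j)"
    using reduced_exists[OF wj] by blast
  have len: "weyl_length alpha J (w \<circ> refl (alpha j)) = length ks"
    unfolding weyl_length_def
  proof (rule Least_equality)
    show "\<exists>js. length js = length ks \<and> set js \<subseteq> J \<and> w \<circ> refl (alpha j) = foldr (\<lambda>j f. refl (alpha j) \<circ> f) js id"
      using ks unfolding reduced_word_def wd_def by metis
  next
    fix k assume "\<exists>js. length js = k \<and> set js \<subseteq> J \<and> w \<circ> refl (alpha j) = foldr (\<lambda>j f. refl (alpha j) \<circ> f) js id"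
    then show "length ks \<le> k" using ks unfolding reduced_word_def wd_def by metis
  qed
  have ksJ: "set ks \<subseteq> {1..n}" using ks J unfolding reduced_word_def by auto
  have j1: "j \<in> {1..n}" using j J by auto
  have "wd alpha ks (alpha j) = w (refl (alpha j) (alpha j))" using ks(2) by simp
  also have "refl (alpha j) (alpha j) = - alpha j"
    unfolding refl_def using alpha_sq[OF j1] by (simp add: algebra_simps scaleR_2)
  finally have "wd alpha ks (alpha j) = - w (alpha j)" using linear_neg[OF weyl_sub_linear[OF w]] by simp
  then have "neg (wd alpha ks (alpha j))" using p unfolding pos_def neg_def by (simp add: coef_minus)
  then obtain ks' where ks': "set ks' \<subseteq> set ks" "Suc (length ks') = length ks"
      "wd alpha ks \<circ> refl (alpha j) = wd alpha ks'" using deletion[OF ksJ j1] by blast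
  have "wd alpha ks' = w" using ks'(3) ks(2) by (simp add: comp_assoc refl_refl_comp)
  then have "weyl_length alpha J w \<le> length ks'"
    unfolding weyl_length_def using ks'(1) ks(1) unfolding reduced_word_def wd_def
    by (intro Least_le) (metis order_trans)
  then show ?thesis using len ks'(2) by simp
qed

lemma longest_neg:
  assumes J: "J \<subseteq> {1..n}" and u: "longest_elem alpha J u" and j: "j \<in> J"
  shows "neg (u (alpha j))"
proof (rule ccontr)
  assume nn: "\<not> neg (u (alpha j))"
  have uJ: "u \<in> weyl_sub alpha J" using u unfolding longest_elem_def by blast
  have j1: "j \<in> {1..n}" using j J by auto
  have "u (alpha j) \<in> Phi" using weyl_Phi[OF uJ J alpha_Phi[OF j1]] .
  then have "pos (u (alpha j))" using root_sign nn by blast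
  from length_gt[OF J uJ j this] have "weyl_length alpha J u < weyl_length alpha J (u \<circ> refl (alpha j))" .
  moreover have "u \<circ> refl (alpha j) \<in> weyl_sub alpha J" using weyl_sub_comp[OF uJ weyl_sub_refl[OF j]] .
  ultimately show False using u unfolding longest_elem_def by fastforce
qed

end


context RS begin

lemma di_dom: "dominant_integral alpha n x \<Longrightarrow> dom x"
  unfolding dominant_integral_def dom_def
proof
  fix i assume h: "\<forall>i\<in>{1..n}. 2 * (x \<bullet> alpha i) / (alpha i \<bullet> alpha i) \<in> \<nat>" and i: "i \<in> {1..n}"
  then have "2 * (x \<bullet> alpha i) / (alpha i \<bullet> alpha i) \<ge> 0" by (metis Nats_cases of_nat_0_le_iff)
  then show "x \<bullet> alpha i \<ge> 0" using alpha_sq[OF i] by (simp add: zero_le_divide_iff)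
qed

lemma di_intw: "dominant_integral alpha n x \<Longrightarrow> intw x"
  unfolding dominant_integral_def intw_def by (metis Nats_cases Ints_of_nat)

lemma nat_floor_Ints: "(r::real) \<in> \<int> \<Longrightarrow> r \<ge> 0 \<Longrightarrow> real (nat \<lfloor>r\<rfloor>) = r"
  by (auto elim!: Ints_cases)

lemma pos_intc_wle: "pos (y - x) \<Longrightarrow> intc (y - x) \<Longrightarrow> wle alpha n x y"
proof -
  assume p: "pos (y - x)" and c: "intc (y - x)"
  define k where "k i = nat \<lfloor>coef alpha n (y - x) i\<rfloor>" for i
  have "y - x = (\<Sum>i=1..n. coef alpha n (y - x) i *\<^sub>R alpha i)" by (rule coef_repr)
  also have "\<dots> = (\<Sum>i=1..n. of_nat (k i) *\<^sub>R alpha i)"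
  proof (rule sum.cong[OF refl])
    fix i assume i: "i \<in> {1..n}"
    have "real (k i) = coef alpha n (y - x) i"
      unfolding k_def using p c i unfolding pos_def intc_def by (intro nat_floor_Ints) auto
    then show "coef alpha n (y - x) i *\<^sub>R alpha i = of_nat (k i) *\<^sub>R alpha i" by simp
  qed
  finally show ?thesis unfolding wle_def by blast
qed

end

locale TH = RS +
  fixes lam :: 'a and I :: "nat set" and u0 :: "'a \<Rightarrow> 'a"
  assumes dl: "dominant_integral alpha n lam" and IS: "I \<subseteq> {1..n}"
    and lo: "longest_elem alpha (comp0 alpha n lam I) u0"
begin

abbreviation "J \<equiv> comp0 alpha n lam I"
abbreviation "T \<equiv> (\<lambda>w. w lam) ` weyl_sub alpha J"
abbreviation "S \<equiv> (\<lambda>w. w lam) ` weyl_sub alpha {1..n}"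

lemma J_sub: "J \<subseteq> {1..n} - I"
proof
  fix j assume "j \<in> J" then show "j \<in> {1..n} - I" by (cases rule: comp0.cases) auto
qed
lemma J1: "J \<subseteq> {1..n}" using J_sub by auto
lemma dom_lam: "dom lam" using di_dom[OF dl] .

lemma K_lam: "k \<in> {1..n} - I \<Longrightarrow> k \<notin> J \<Longrightarrow> lam \<bullet> alpha k = 0"
  using dom_lam comp0.start[of k n I lam alpha] unfolding dom_def by force

lemma K_orth: "k \<in> {1..n} - I \<Longrightarrow> k \<notin> J \<Longrightarrow> j \<in> J \<Longrightarrow> alpha j \<bullet> alpha k = 0"
  using comp0.step[of j alpha n lam I k] by auto

lemma K_comm:
  assumes k: "k \<in> {1..n} - I" "k \<notin> J" and v: "v \<in> weyl_sub alpha J"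
  shows "refl (alpha k) (v x) = v (refl (alpha k) x)"
  using v
proof (induction rule: weyl_sub.induct)
  case id then show ?case by simp
next
  case (step w j)
  have kj: "alpha k \<bullet> alpha j = 0" using K_orth[OF k step.hyps(2)] by (simp add: inner_commute)
  show ?case using refl_comm[OF kj, of "w x"] step.IH by simp
qed

lemma WL_WJ: "v \<in> weyl_sub alpha ({1..n} - I) \<Longrightarrow> \<exists>v'\<in>weyl_sub alpha J. v lam = v' lam"
proof (induction rule: weyl_sub.induct)
  case id then show ?case using weyl_sub.id by blast
next
  case (step w j)
  then obtain v' where v': "v' \<in> weyl_sub alpha J" "w lam = v' lam" by blast
  show ?case
  proof (cases "j \<in> J")
    case True
    then show ?thesis using v' weyl_sub.step[OF v'(1) True] by (intro bexI[of _ "refl (alpha j) \<circ> v'"]) auto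
  next
    case False
    have "refl (alpha j) lam = lam" using K_lam[OF step.hyps(2) False] unfolding refl_def by simp
    then have "(refl (alpha j) \<circ> w) lam = v' lam" using v' K_comm[OF step.hyps(2) False v'(1)] by simp
    then show ?thesis using v'(1) by blast
  qed
qed

lemma T_coef: "w \<in> weyl_sub alpha J \<Longrightarrow> i \<in> I \<Longrightarrow> coef alpha n (w lam) i = coef alpha n lam i"
  using support_coef[OF _ J1] J_sub by blast

lemma finS: "finite S" using finite_weyl by simp

lemma convF: "convex (face_F alpha n lam I)"
proof (rule convexI)
  fix x y :: 'a and u v :: real
  assume x: "x \<in> face_F alpha n lam I" and y: "y \<in> face_F alpha n lam I"
    and uv: "0 \<le> u" "0 \<le> v" "u + v = 1"
  have h: "u *\<^sub>R x + v *\<^sub>R y \<in> weight_polytope alpha n lam"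
    using x y uv unfolding face_F_def weight_polytope_def by (intro convexD[OF convex_convex_hull]) auto
  have "coef alpha n (u *\<^sub>R x + v *\<^sub>R y) i = coef alpha n lam i" if i: "i \<in> I" for i
  proof -
    have "coef alpha n (u *\<^sub>R x + v *\<^sub>R y) i = u * coef alpha n lam i + v * coef alpha n lam i"
      using x y i unfolding face_F_def by (simp add: coef_add coef_scale)
    also have "\<dots> = (u + v) * coef alpha n lam i" by (simp add: algebra_simps)
    finally show ?thesis using uv by simp
  qed
  then show "u *\<^sub>R x + v *\<^sub>R y \<in> face_F alpha n lam I" using h unfolding face_F_def by blast
qed

lemma F_eq: "face_F alpha n lam I = convex hull T"
proof
  show "convex hull T \<subseteq> face_F alpha n lam I"
  proof (rule hull_minimal)
    show "T \<subseteq> face_F alpha n lam I"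
    proof
      fix x assume "x \<in> T"
      then obtain w where w: "w \<in> weyl_sub alpha J" and x: "x = w lam" by blast
      have "w \<in> weyl_sub alpha {1..n}" using w weyl_sub_mono[OF J1] by blast
      then have "x \<in> weight_polytope alpha n lam" unfolding weight_polytope_def x by (intro hull_inc) blast
      then show "x \<in> face_F alpha n lam I" unfolding face_F_def using T_coef[OF w] x by blast
    qed
  qed (rule convF)
next
  show "face_F alpha n lam I \<subseteq> convex hull T"
  proof
    fix x assume xF: "x \<in> face_F alpha n lam I"
    then have xh: "x \<in> convex hull S" and xc: "\<forall>i\<in>I. coef alpha n x i = coef alpha n lam i"
      unfolding face_F_def weight_polytope_def by auto
    obtain u where u: "\<forall>y\<in>S. 0 \<le> u y" "sum u S = 1" "(\<Sum>y\<in>S. u y *\<^sub>R y) = x"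
      using xh unfolding convex_hull_finite[OF finS] by blast
    have le: "coef alpha n y i \<le> coef alpha n lam i" if yS: "y \<in> S" and i1: "i \<in> {1..n}" for y i
    proof -
      obtain w where w: "w \<in> weyl_sub alpha {1..n}" "y = w lam" using yS by blast
      have "pos (lam - w lam)" using dom_pos[OF w(1) subset_refl dom_lam] .
      then show ?thesis using i1 w(2) unfolding pos_def by (simp add: coef_diff)
    qed
    have zero: "coef alpha n y i = coef alpha n lam i" if y: "y \<in> S" and i: "i \<in> I" and uy: "u y \<noteq> 0" for y i
    proof -
      have i1: "i \<in> {1..n}" using i IS by auto
      have cx: "coef alpha n x i = (\<Sum>y\<in>S. u y * coef alpha n y i)"
        unfolding u(3)[symmetric] by (simp add: coef_sum coef_scale)
      have "(\<Sum>y\<in>S. u y * (coef alpha n lam i - coef alpha n y i))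
          = coef alpha n lam i * sum u S - coef alpha n x i"
        unfolding cx by (simp add: algebra_simps sum_subtractf sum_distrib_left)
      also have "\<dots> = 0" using u(2) xc i by simp
      finally have s0: "(\<Sum>y\<in>S. u y * (coef alpha n lam i - coef alpha n y i)) = 0" .
      have nn: "0 \<le> u y * (coef alpha n lam i - coef alpha n y i)" if yy: "y \<in> S" for y
        using u(1) yy le[OF yy i1] by (intro mult_nonneg_nonneg) auto
      have "\<forall>y\<in>S. u y * (coef alpha n lam i - coef alpha n y i) = 0"
        using iffD1[OF sum_nonneg_eq_0_iff[OF finS nn] s0] .
      then have "u y * (coef alpha n lam i - coef alpha n y i) = 0" using y by blast
      then show ?thesis using uy by simp
    qed
    define g where "g y = (if u y = 0 then lam else y)" for y
    have "x = (\<Sum>y\<in>S. u y *\<^sub>R g y)" unfolding u(3)[symmetric] g_def by (intro sum.cong) auto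
    also have "\<dots> \<in> convex hull T"
    proof (rule convex_sum[OF finS convex_convex_hull u(2)])
      show "\<And>y. y \<in> S \<Longrightarrow> 0 \<le> u y" using u(1) by blast
    next
      fix y assume y: "y \<in> S"
      show "g y \<in> convex hull T"
      proof (cases "u y = 0")
        case True
        have "lam \<in> T" using weyl_sub.id[of alpha J] by (metis id_apply image_eqI)
        then show ?thesis unfolding g_def using True by (simp add: hull_inc)
      next
        case False
        obtain w where w: "w \<in> weyl_sub alpha {1..n}" "y = w lam" using y by blast
        have "\<exists>v\<in>weyl_sub alpha ({1..n} - I). w lam = v lam"
          using zero[OF y _ False] w(2) by (intro orbit_face[OF _ dom_lam w(1)]) auto
        then obtain v where "v \<in> weyl_sub alpha ({1..n} - I)" "w lam = v lam" by blast
        then obtain v' where "v' \<in> weyl_sub alpha J" "y = v' lam" using WL_WJ w(2) by metis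
        then have "y \<in> T" by blast
        then show ?thesis unfolding g_def using False by (simp add: hull_inc)
      qed
    qed
    finally show "x \<in> convex hull T" .
  qed
qed

end


context TH begin

definition D :: "'a set" where
  "D = {mu - nu | mu nu. mu \<in> face_F alpha n lam I \<and> nu \<in> face_F alpha n lam I}"

lemma lamT: "lam \<in> T" using weyl_sub.id[of alpha J] by (metis id_apply image_eqI)

lemma hullT_span: "mu \<in> convex hull T \<Longrightarrow> mu - lam \<in> span (alpha ` J)"
proof -
  assume mu: "mu \<in> convex hull T"
  let ?Q = "{y. y - lam \<in> span (alpha ` J)}"
  have "convex hull T \<subseteq> ?Q"
  proof (rule hull_minimal)
    show "T \<subseteq> ?Q"
    proof
      fix x assume "x \<in> T"
      then obtain w where w: "w \<in> weyl_sub alpha J" "x = w lam" by blast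
      have "-(lam - w lam) \<in> span (alpha ` J)" using span_neg[OF support_span[OF w(1)]] .
      then show "x \<in> ?Q" using w(2) by simp
    qed
  next
    show "convex ?Q"
    proof (rule convexI)
      fix x y :: 'a and u v :: real
      assume x: "x \<in> ?Q" and y: "y \<in> ?Q" and uv: "0 \<le> u" "0 \<le> v" "u + v = 1"
      have v: "v = 1 - u" using uv by simp
      have "u *\<^sub>R x + v *\<^sub>R y - lam = u *\<^sub>R (x - lam) + v *\<^sub>R (y - lam)"
        unfolding v by (simp add: algebra_simps)
      also have "\<dots> \<in> span (alpha ` J)" using x y by (intro span_add span_scale) auto
      finally show "u *\<^sub>R x + v *\<^sub>R y \<in> ?Q" by simp
    qed
  qed
  then show ?thesis using mu by blast
qed

lemma span_D: "span D = span (alpha ` J)"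
proof
  have "D \<subseteq> span (alpha ` J)"
  proof
    fix d assume "d \<in> D"
    then obtain mu nu where d: "d = mu - nu" "mu \<in> convex hull T" "nu \<in> convex hull T"
      unfolding D_def F_eq by blast
    have "d = (mu - lam) - (nu - lam)" using d(1) by simp
    then show "d \<in> span (alpha ` J)" using hullT_span d(2,3) span_diff by metis
  qed
  then show "span D \<subseteq> span (alpha ` J)" using span_mono span_span by metis
next
  define G where "G = {w lam - lam | w. w \<in> weyl_sub alpha J}"
  have GD: "G \<subseteq> D"
  proof
    fix g assume "g \<in> G"
    then obtain w where w: "w \<in> weyl_sub alpha J" "g = w lam - lam" unfolding G_def by blast
    have "w lam \<in> convex hull T" "lam \<in> convex hull T" using w(1) lamT by (auto intro: hull_inc)
    then show "g \<in> D" unfolding D_def F_eq using w(2) by blast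
  qed
  have inv: "refl (alpha j) y \<in> span G" if j: "j \<in> J" and y: "y \<in> span G" for j y
  proof -
    have "refl (alpha j) ` G \<subseteq> span G"
    proof
      fix z assume "z \<in> refl (alpha j) ` G"
      then obtain w where w: "w \<in> weyl_sub alpha J" "z = refl (alpha j) (w lam - lam)" unfolding G_def by blast
      have "z = ((refl (alpha j) \<circ> w) lam - lam) - (refl (alpha j) lam - lam)"
        using w(2) linear_diff[OF refl_linear] by simp
      moreover have "(refl (alpha j) \<circ> w) lam - lam \<in> G" unfolding G_def using weyl_sub.step[OF w(1) j] by blast
      moreover have "refl (alpha j) lam - lam \<in> G" unfolding G_def using weyl_sub_refl[OF j] by blast
      ultimately show "z \<in> span G" by (metis span_base span_diff)
    qed
    then have "span (refl (alpha j) ` G) \<subseteq> span G" using span_mono span_span by metis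
    moreover have "refl (alpha j) y \<in> span (refl (alpha j) ` G)"
      using span_linear_image[OF refl_linear] y by blast
    ultimately show ?thesis by blast
  qed
  have aG: "alpha j \<in> span G" if "j \<in> J" for j
    using that
  proof (induction rule: comp0.induct)
    case (start j)
    have jJ: "j \<in> J" using comp0.start[of j n I lam alpha] start.hyps by blast
    have j1: "j \<in> {1..n}" using start by auto
    define c where "c = (2 * (lam \<bullet> alpha j)) / (alpha j \<bullet> alpha j)"
    have c: "c > 0" unfolding c_def using start.hyps(2) alpha_sq[OF j1] by simp
    have "refl (alpha j) lam - lam \<in> G" unfolding G_def using weyl_sub_refl[OF jJ] by blast
    then have "(- 1 / c) *\<^sub>R (refl (alpha j) lam - lam) \<in> span G" by (intro span_scale span_base)
    moreover have "(- 1 / c) *\<^sub>R (refl (alpha j) lam - lam) = alpha j"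
      unfolding refl_def c_def[symmetric] using c by simp
    ultimately show ?case by simp
  next
    case (step i j)
    have jJ: "j \<in> J" using comp0.step[OF step.hyps(1-4)] .
    have j1: "j \<in> {1..n}" using step by auto
    define c where "c = (2 * (alpha i \<bullet> alpha j)) / (alpha j \<bullet> alpha j)"
    have c: "c \<noteq> 0" unfolding c_def using step.hyps(4) alpha_sq[OF j1] by simp
    have "refl (alpha j) (alpha i) - alpha i \<in> span G" using inv[OF jJ step.IH] step.IH by (intro span_diff)
    then have "(- 1 / c) *\<^sub>R (refl (alpha j) (alpha i) - alpha i) \<in> span G" by (intro span_scale)
    moreover have "(- 1 / c) *\<^sub>R (refl (alpha j) (alpha i) - alpha i) = alpha j"
      unfolding refl_def c_def[symmetric] using c by simp
    ultimately show ?case by simp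
  qed
  have "alpha ` J \<subseteq> span D" using aG span_mono[OF GD] by blast
  then show "span (alpha ` J) \<subseteq> span D" using span_mono span_span by metis
qed

lemma dim_D: "dim (span D) = card J"
proof -
  have "independent (alpha ` J)" using independent_mono[OF indep] J1 by blast
  then have "dim (span D) = card (alpha ` J)" unfolding span_D dim_span by (rule dim_eq_card_independent)
  also have "\<dots> = card J" using card_image[OF inj_on_subset[OF inj_alpha J1]] .
  finally show ?thesis .
qed

lemma u0J: "u0 \<in> weyl_sub alpha J" using lo unfolding longest_elem_def by blast
lemma u0W: "u0 \<in> weyl_sub alpha {1..n}" using u0J weyl_sub_mono[OF J1] by blast

lemma u0_in: "u0 lam \<in> face_P alpha n lam I"
proof -
  have "wle alpha n lam lam" unfolding wle_def by (intro exI[of _ "\<lambda>_. 0"]) simp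
  then have "u0 lam \<in> weights alpha n lam" unfolding weights_def using u0W dl by blast
  then show ?thesis unfolding face_P_def using T_coef[OF u0J] by blast
qed

lemma T_above: "v \<in> weyl_sub alpha J \<Longrightarrow> pos (v lam - u0 lam)"
proof -
  assume v: "v \<in> weyl_sub alpha J"
  obtain u' where u': "u' \<in> weyl_sub alpha J" "u' \<circ> u0 = id" "u0 \<circ> u' = id"
    using weyl_sub_inv2[OF u0J] by blast
  have uv: "u' \<circ> v \<in> weyl_sub alpha J" using weyl_sub_comp[OF u'(1) v] .
  define b where "b = lam - u' (v lam)"
  have pb: "pos b" unfolding b_def using dom_pos[OF uv J1 dom_lam] by simp
  have b0: "coef alpha n b j = 0" if "j \<notin> J" for j
    unfolding b_def using coef_span_zero[OF support_span[OF uv] J1 that] by simp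
  have lin: "linear u0" using weyl_sub_linear[OF u0J] .
  have "v lam - u0 lam = u0 (u' (v lam)) - u0 lam" using u'(3) by (metis comp_apply id_apply)
  also have "\<dots> = - u0 b" unfolding b_def using linear_diff[OF lin] by simp
  also have "u0 b = (\<Sum>j=1..n. coef alpha n b j *\<^sub>R u0 (alpha j))"
    by (subst coef_repr[of b]) (simp add: linear_sum[OF lin] linear_scale[OF lin])
  finally have eq: "v lam - u0 lam = (\<Sum>j=1..n. coef alpha n b j *\<^sub>R (- u0 (alpha j)))"
    by (simp add: sum_negf)
  show ?thesis unfolding eq
  proof (rule pos_sum)
    fix j assume j: "j \<in> {1..n}"
    show "pos (coef alpha n b j *\<^sub>R (- u0 (alpha j)))"
    proof (cases "j \<in> J")
      case True
      have "neg (u0 (alpha j))" using longest_neg[OF J1 lo True] .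
      then have "pos (- u0 (alpha j))" unfolding neg_def pos_def by (simp add: coef_minus)
      moreover have "coef alpha n b j \<ge> 0" using pb j unfolding pos_def by blast
      ultimately show ?thesis by (rule pos_scale)
    next
      case False then show ?thesis using b0 by (simp add: pos_zero)
    qed
  qed
qed

lemma least: "mu \<in> face_P alpha n lam I \<Longrightarrow> wle alpha n (u0 lam) mu"
proof -
  assume muP: "mu \<in> face_P alpha n lam I"
  then obtain w nu where w: "w \<in> weyl_sub alpha {1..n}" and mu: "mu = w nu"
    and dnu: "dominant_integral alpha n nu" and le: "wle alpha n nu lam"
    unfolding face_P_def weights_def by blast
  have mc: "\<forall>i\<in>I. coef alpha n mu i = coef alpha n lam i" using muP unfolding face_P_def by blast
  obtain c :: "nat \<Rightarrow> nat" where c: "lam - nu = (\<Sum>i=1..n. of_nat (c i) *\<^sub>R alpha i)"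
    using le unfolding wle_def by blast
  have cc: "coef alpha n (lam - nu) i = of_nat (c i)" if "i \<in> {1..n}" for i
    using coef_eq[OF c that] .
  have pln: "pos (lam - nu)" unfolding pos_def using cc by simp
  have iln: "intc (lam - nu)" unfolding intc_def using cc by simp
  have "nu \<in> convex hull S" using hull_dom[OF dom_lam di_dom[OF dnu] pln] .
  then have "w nu \<in> w ` (convex hull S)" by blast
  also have "\<dots> = convex hull (w ` S)" using convex_hull_linear_image[OF weyl_sub_linear[OF w]] .
  also have "\<dots> \<subseteq> convex hull S"
  proof (rule hull_mono)
    show "w ` S \<subseteq> S"
    proof
      fix z assume "z \<in> w ` S"
      then obtain v where v: "v \<in> weyl_sub alpha {1..n}" "z = w (v lam)" by blast
      then have "z = (w \<circ> v) lam" by simp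
      then show "z \<in> S" using weyl_sub_comp[OF w v(1)] by blast
    qed
  qed
  finally have "mu \<in> weight_polytope alpha n lam" unfolding weight_polytope_def mu .
  then have "mu \<in> face_F alpha n lam I" unfolding face_F_def using mc by blast
  then have muT: "mu \<in> convex hull T" using F_eq by simp
  let ?Q = "{y. pos (y - u0 lam)}"
  have "convex hull T \<subseteq> ?Q"
  proof (rule hull_minimal)
    show "T \<subseteq> ?Q" using T_above by blast
  next
    show "convex ?Q"
    proof (rule convexI)
      fix x y :: 'a and u v :: real
      assume x: "x \<in> ?Q" and y: "y \<in> ?Q" and uv: "0 \<le> u" "0 \<le> v" "u + v = 1"
      have v: "v = 1 - u" using uv by simp
      have "u *\<^sub>R x + v *\<^sub>R y - u0 lam = u *\<^sub>R (x - u0 lam) + v *\<^sub>R (y - u0 lam)"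
        unfolding v by (simp add: algebra_simps)
      also have "pos \<dots>" using x y uv by (intro pos_add pos_scale) auto
      finally show "u *\<^sub>R x + v *\<^sub>R y \<in> ?Q" by simp
    qed
  qed
  then have p: "pos (mu - u0 lam)" using muT by blast
  have i1: "intc (w nu - nu)"
    using intc_diff[OF intc_zero weyl_intc[OF w subset_refl di_intw[OF dnu]]] by simp
  have i2: "intc (lam - u0 lam)" using weyl_intc[OF u0W subset_refl di_intw[OF dl]] .
  have "mu - u0 lam = (w nu - nu) - (lam - nu) + (lam - u0 lam)" unfolding mu by simp
  then have "intc (mu - u0 lam)" using intc_add[OF intc_diff[OF i1 iln] i2] by simp
  then show ?thesis using pos_intc_wle[OF p] by blast
qed

end

theorem theorem4p3:
  fixes Phi :: "'a::euclidean_space set" and alpha :: "nat \<Rightarrow> 'a" and n :: nat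
    and lam :: 'a and I :: "nat set" and u0 :: "'a \<Rightarrow> 'a"
  assumes "root_system Phi" and "irreducible_rs Phi" and "is_base Phi alpha n"
    and "dominant_integral alpha n lam"
    and "I \<subseteq> {1..n}"
    and "longest_elem alpha (comp0 alpha n lam I) u0"
  shows "(face_F alpha n lam I = convex hull ((\<lambda>w. w lam) ` weyl_sub alpha (comp0 alpha n lam I))
    \<and> (u0 lam \<in> face_P alpha n lam I \<and> (\<forall>mu\<in>face_P alpha n lam I. wle alpha n (u0 lam) mu))
    \<and> (span {mu - nu | mu nu. mu \<in> face_F alpha n lam I \<and> nu \<in> face_F alpha n lam I}
           = span (alpha ` comp0 alpha n lam I)
         \<and> dim (span {mu - nu | mu nu. mu \<in> face_F alpha n lam I \<and> nu \<in> face_F alpha n lam I})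
           = card (comp0 alpha n lam I)))"
proof -
  interpret TH Phi alpha n lam I u0
    using assms by (unfold_locales) auto
  show ?thesis using F_eq u0_in least span_D dim_D unfolding D_def by blast
qed


end
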